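(* $\Omega(\eta)$ is equimorphic, as a join-semilattice, to every member of $\mathcal{L_D}$.
   Context: $\Omega(\eta)$ denotes the join-subsemilattice of the direct product $\mathbb{N}\times D$ (componentwise order), where $\mathbb{N}$ is the chain of non-negative integers and $D$ is the chain of dyadic rationals in $[0,1)$, consisting of the pairs $(n,r)$ with $2^n r\in\mathbb{Z}$. A bichain is a triple $B=(X,\leq_1,\leq_2)$ with $\leq_1,\leq_2$ linear orders on a set $X$; $C(B)$ denotes the closure system on $X$ whose closed sets are the sets $I_1\cap I_2$ with $I_k$ an initial segment of $(X,\leq_k)$, ordered by inclusion (an algebraic lattice), and $K(C(B))$ is the join-semilattice of its compact elements (the closures of finite subsets of $X$). $\mathcal{L_D}$ is the class of join-semilattices isomorphic to $K(C(B))$ for some bichain $B$ whose first component $(X,\leq_1)$ has order type $\omega$ and whose second component $(X,\leq_2)$ is not order-scattered (contains a copy of $\mathbb{Q}$). Two join-semilattices are equimorphic as join-semilattices if each embeds into the other by a one-to-one join-preserving map. *)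

theory Defs
  imports "HOL-Library.Order_Continuity"
begin

definition is_join :: "('a \<Rightarrow> 'a \<Rightarrow> bool) \<Rightarrow> 'a set \<Rightarrow> 'a \<Rightarrow> 'a \<Rightarrow> 'a \<Rightarrow> bool" where
  "is_join le S x y z \<longleftrightarrow> z \<in> S \<and> le x z \<and> le y z \<and> (\<forall>w\<in>S. le x w \<and> le y w \<longrightarrow> le z w)"

definition join_semilattice :: "'a set \<Rightarrow> ('a \<Rightarrow> 'a \<Rightarrow> bool) \<Rightarrow> bool" where
  "join_semilattice S le \<longleftrightarrow>
     (\<forall>x\<in>S. le x x) \<and>
     (\<forall>x\<in>S. \<forall>y\<in>S. le x y \<and> le y x \<longrightarrow> x = y) \<and>
     (\<forall>x\<in>S. \<forall>y\<in>S. \<forall>z\<in>S. le x y \<and> le y z \<longrightarrow> le x z) \<and>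
     (\<forall>x\<in>S. \<forall>y\<in>S. \<exists>z. is_join le S x y z)"

definition join_embedding ::
  "('a \<Rightarrow> 'b) \<Rightarrow> 'a set \<Rightarrow> ('a \<Rightarrow> 'a \<Rightarrow> bool) \<Rightarrow> 'b set \<Rightarrow> ('b \<Rightarrow> 'b \<Rightarrow> bool) \<Rightarrow> bool" where
  "join_embedding f S leS T leT \<longleftrightarrow>
     inj_on f S \<and> f ` S \<subseteq> T \<and>
     (\<forall>x\<in>S. \<forall>y\<in>S. \<forall>z\<in>S. is_join leS S x y z \<longrightarrow> is_join leT T (f x) (f y) (f z))"

definition join_equimorphic ::
  "'a set \<Rightarrow> ('a \<Rightarrow> 'a \<Rightarrow> bool) \<Rightarrow> 'b set \<Rightarrow> ('b \<Rightarrow> 'b \<Rightarrow> bool) \<Rightarrow> bool" where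
  "join_equimorphic S leS T leT \<longleftrightarrow>
     (\<exists>f. join_embedding f S leS T leT) \<and> (\<exists>g. join_embedding g T leT S leS)"

definition dyadic_unit :: "rat set" where
  "dyadic_unit = {r. 0 \<le> r \<and> r < 1 \<and> (\<exists>n::nat. \<exists>k::int. (2::rat) ^ n * r = of_int k)}"

definition Omega_eta :: "(nat \<times> rat) set" where
  "Omega_eta = {(n, r). r \<in> dyadic_unit \<and> (\<exists>k::int. (2::rat) ^ n * r = of_int k)}"

definition prod_le :: "nat \<times> rat \<Rightarrow> nat \<times> rat \<Rightarrow> bool" where
  "prod_le p q \<longleftrightarrow> fst p \<le> fst q \<and> snd p \<le> snd q"

definition bichain :: "'a set \<Rightarrow> 'a rel \<Rightarrow> 'a rel \<Rightarrow> bool" where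
  "bichain X r1 r2 \<longleftrightarrow> linear_order_on X r1 \<and> linear_order_on X r2"

definition initial_segment :: "'a set \<Rightarrow> 'a rel \<Rightarrow> 'a set \<Rightarrow> bool" where
  "initial_segment X r I \<longleftrightarrow> I \<subseteq> X \<and> (\<forall>x\<in>I. \<forall>y\<in>X. (y, x) \<in> r \<longrightarrow> y \<in> I)"

definition bichain_closed_sets :: "'a set \<Rightarrow> 'a rel \<Rightarrow> 'a rel \<Rightarrow> 'a set set" where
  "bichain_closed_sets X r1 r2 =
     {I1 \<inter> I2 | I1 I2. initial_segment X r1 I1 \<and> initial_segment X r2 I2}"

definition bichain_closure :: "'a set \<Rightarrow> 'a rel \<Rightarrow> 'a rel \<Rightarrow> 'a set \<Rightarrow> 'a set" where
  "bichain_closure X r1 r2 A = \<Inter> {C \<in> bichain_closed_sets X r1 r2. A \<subseteq> C}"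

text \<open>K(C(B)): the compact elements, i.e. closures of finite subsets of X.\<close>
definition bichain_compacts :: "'a set \<Rightarrow> 'a rel \<Rightarrow> 'a rel \<Rightarrow> 'a set set" where
  "bichain_compacts X r1 r2 =
     {bichain_closure X r1 r2 F | F. finite F \<and> F \<subseteq> X}"

definition has_order_type_omega :: "'a set \<Rightarrow> 'a rel \<Rightarrow> bool" where
  "has_order_type_omega X r \<longleftrightarrow>
     (\<exists>f::nat \<Rightarrow> 'a. bij_betw f UNIV X \<and> (\<forall>i j. (f i, f j) \<in> r \<longleftrightarrow> i \<le> j))"

text \<open>Not order-scattered: contains a copy of the rationals.\<close>
definition contains_copy_of_rat :: "'a set \<Rightarrow> 'a rel \<Rightarrow> bool" where
  "contains_copy_of_rat X r \<longleftrightarrow>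
     (\<exists>g::rat \<Rightarrow> 'a. inj g \<and> range g \<subseteq> X \<and> (\<forall>p q. p \<le> q \<longrightarrow> (g p, g q) \<in> r))"

end

theory Submission imports Defs "HOL-Library.Infinite_Set" begin

lemma dy_up: "(2::rat)^n * r = of_int k \<Longrightarrow> n \<le> N \<Longrightarrow> \<exists>k'::int. (2::rat)^N * r = of_int k'"
proof -
  assume a: "(2::rat)^n * r = of_int k" "n \<le> N"
  have "(2::rat)^N * r = 2^(N-n) * (2^n * r)" using a(2) by (simp add: power_add[symmetric] mult.assoc[symmetric])
  then have "(2::rat)^N * r = of_int (2^(N-n) * k)" using a(1) by simp
  then show ?thesis by blast
qed

locale setting =
  fixes X :: "'a set" and r1 r2 :: "'a rel" and e :: "nat \<Rightarrow> 'a"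
  assumes lin: "linear_order_on X r2"
  and ebij: "bij_betw e UNIV X" and er1: "\<And>i j. (e i, e j) \<in> r1 \<longleftrightarrow> i \<le> j"
begin

definition idx where "idx = inv_into UNIV e"
definition D where "D m a = {x\<in>X. idx x \<le> m \<and> (x,a) \<in> r2}"
definition valid where "valid m a \<longleftrightarrow> a \<in> X \<and> idx a \<le> m \<and> (e m, a) \<in> r2"
definition T where "T x i = (if (e i, x) \<in> r2 then (1/2::rat)^Suc i else 0)"
definition phi where "phi x = (\<Sum>i<Suc (idx x). T x i)"

lemma e_in[simp]: "e i \<in> X" using ebij by (auto simp: bij_betw_def)
lemma idx_e[simp]: "idx (e i) = i" using ebij unfolding idx_def bij_betw_def by (simp add: inv_into_f_f)
lemma e_idx[simp]: "x \<in> X \<Longrightarrow> e (idx x) = x" using ebij unfolding idx_def bij_betw_def by (simp add: f_inv_into_f)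
lemma r2_X: "(x,y) \<in> r2 \<Longrightarrow> x \<in> X \<and> y \<in> X" using lin by (auto simp: linear_order_on_def partial_order_on_def preorder_on_def)
lemma refl2: "x \<in> X \<Longrightarrow> (x,x) \<in> r2" using lin by (auto simp: linear_order_on_def partial_order_on_def preorder_on_def refl_on_def)
lemma trans2: "(x,y) \<in> r2 \<Longrightarrow> (y,z) \<in> r2 \<Longrightarrow> (x,z) \<in> r2" using lin by (auto simp: linear_order_on_def partial_order_on_def preorder_on_def elim: transE)
lemma antisym2: "(x,y) \<in> r2 \<Longrightarrow> (y,x) \<in> r2 \<Longrightarrow> x = y" using lin by (auto simp: linear_order_on_def partial_order_on_def antisym_def)
lemma total2: "x \<in> X \<Longrightarrow> y \<in> X \<Longrightarrow> (x,y) \<in> r2 \<or> (y,x) \<in> r2" using lin refl2 unfolding linear_order_on_def total_on_def by metis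
lemma idx_inj: "x \<in> X \<Longrightarrow> y \<in> X \<Longrightarrow> idx x = idx y \<Longrightarrow> x = y" by (metis e_idx)
lemma idx_le: "x \<in> X \<Longrightarrow> y \<in> X \<Longrightarrow> (x,y) \<in> r1 \<Longrightarrow> idx x \<le> idx y" by (metis e_idx er1)

lemma geo: "(\<Sum>i<n. (1/2::rat)^Suc i) = 1 - (1/2)^n"
  by (induction n) (auto simp: field_simps)

lemma geo_tail: "Suc k \<le> n \<Longrightarrow> (\<Sum>i=Suc k..<n. (1/2::rat)^Suc i) = (1/2)^Suc k - (1/2)^n"
proof -
  assume a: "Suc k \<le> n"
  have "(\<Sum>i<n. (1/2::rat)^Suc i) = (\<Sum>i<Suc k. (1/2::rat)^Suc i) + (\<Sum>i=Suc k..<n. (1/2::rat)^Suc i)"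
    using a by (metis atLeast0LessThan sum.atLeastLessThan_concat zero_le)
  then show ?thesis using geo[of n] geo[of "Suc k"] by simp
qed

lemma T_nonneg: "0 \<le> T x i" by (simp add: T_def)
lemma T_le: "T x i \<le> (1/2)^Suc i" by (simp add: T_def)
lemma T_mono: "(x,y) \<in> r2 \<Longrightarrow> T x i \<le> T y i" by (auto simp: T_def dest: trans2)
lemma T_self: "x \<in> X \<Longrightarrow> T x (idx x) = (1/2)^Suc (idx x)" by (simp add: T_def refl2)

lemma phi_nonneg: "0 \<le> phi x" unfolding phi_def by (simp add: sum_nonneg T_nonneg)
lemma phi_lt1: "phi x < 1"
proof -
  have "phi x \<le> (\<Sum>i<Suc (idx x). (1/2::rat)^Suc i)" unfolding phi_def by (rule sum_mono) (rule T_le)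
  also have "\<dots> < 1" by (subst geo) simp
  finally show ?thesis .
qed

lemma phi_strict:
  assumes x: "x \<in> X" and y: "y \<in> X" and xy: "(x,y) \<in> r2" and ne: "x \<noteq> y"
  shows "phi x < phi y"
proof -
  define j where "j = idx x"
  define k where "k = idx y"
  have jk: "j \<noteq> k" using idx_inj x y ne j_def k_def by blast
  have Tm: "\<And>i. T x i \<le> T y i" using T_mono xy by blast
  show ?thesis
  proof (cases "j < k")
    case True
    have "phi x \<le> (\<Sum>i<Suc j. T y i)" unfolding phi_def j_def by (rule sum_mono) (rule Tm)
    also have "\<dots> < (\<Sum>i<Suc j. T y i) + (\<Sum>i=Suc j..<Suc k. T y i)"
    proof -
      have "T y k \<le> (\<Sum>i=Suc j..<Suc k. T y i)"
        by (rule member_le_sum) (use True in \<open>auto simp: T_nonneg\<close>)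
      moreover have "T y k = (1/2)^Suc k" using T_self[OF y] k_def by simp
      moreover have "(0::rat) < (1/2)^Suc k" by simp
      ultimately have "0 < (\<Sum>i=Suc j..<Suc k. T y i)" by linarith
      then show ?thesis by linarith
    qed
    also have "\<dots> = phi y" unfolding phi_def k_def[symmetric]
      using True by (metis atLeast0LessThan sum.atLeastLessThan_concat zero_le Suc_le_mono less_imp_le)
    finally show ?thesis .
  next
    case False
    then have kj: "k < j" using jk by simp
    have Txk: "T x k = 0"
    proof -
      have "(y, x) \<notin> r2" using antisym2 xy ne by blast
      then show ?thesis unfolding T_def using y k_def by simp
    qed
    have "phi x = (\<Sum>i<k. T x i) + T x k + (\<Sum>i=Suc k..<Suc j. T x i)"
    proof -
      have "phi x = (\<Sum>i<Suc k. T x i) + (\<Sum>i=Suc k..<Suc j. T x i)" unfolding phi_def j_def[symmetric]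
        using kj by (metis atLeast0LessThan sum.atLeastLessThan_concat zero_le Suc_le_mono less_imp_le)
      then show ?thesis by simp
    qed
    also have "\<dots> \<le> (\<Sum>i<k. T y i) + (\<Sum>i=Suc k..<Suc j. (1/2::rat)^Suc i)"
    proof -
      have "(\<Sum>i<k. T x i) \<le> (\<Sum>i<k. T y i)" by (rule sum_mono) (rule Tm)
      moreover have "(\<Sum>i=Suc k..<Suc j. T x i) \<le> (\<Sum>i=Suc k..<Suc j. (1/2::rat)^Suc i)"
        by (rule sum_mono) (rule T_le)
      ultimately show ?thesis using Txk by linarith
    qed
    also have "\<dots> < (\<Sum>i<k. T y i) + (1/2)^Suc k"
    proof -
      have "(\<Sum>i=Suc k..<Suc j. (1/2::rat)^Suc i) = (1/2)^Suc k - (1/2)^Suc j"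
        by (rule geo_tail) (use kj in simp)
      moreover have "(0::rat) < (1/2)^Suc j" by simp
      ultimately show ?thesis by linarith
    qed
    also have "\<dots> = phi y" unfolding phi_def k_def[symmetric] using T_self[OF y] k_def by simp
    finally show ?thesis .
  qed
qed


lemma phi_mono: "x \<in> X \<Longrightarrow> y \<in> X \<Longrightarrow> (x,y) \<in> r2 \<Longrightarrow> phi x \<le> phi y"
  using phi_strict by fastforce
lemma phi_le_r2: "x \<in> X \<Longrightarrow> y \<in> X \<Longrightarrow> phi x \<le> phi y \<Longrightarrow> (x,y) \<in> r2"
  using phi_strict total2 refl2 by fastforce
lemma phi_inj: "x \<in> X \<Longrightarrow> y \<in> X \<Longrightarrow> phi x = phi y \<Longrightarrow> x = y"
  using phi_le_r2 antisym2 by (metis order_refl)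

abbreviation "cls \<equiv> bichain_closed_sets X r1 r2"
abbreviation "KK \<equiv> bichain_compacts X r1 r2"
abbreviation "cl \<equiv> bichain_closure X r1 r2"

lemma D_sub: "D m a \<subseteq> X" by (auto simp: D_def)

lemma D_closed: "D m a \<in> cls"
proof -
  let ?I1 = "{x\<in>X. idx x \<le> m}" and ?I2 = "{x\<in>X. (x,a) \<in> r2}"
  have 1: "initial_segment X r1 ?I1" unfolding initial_segment_def using idx_le by fastforce
  have 2: "initial_segment X r2 ?I2" unfolding initial_segment_def using trans2 by blast
  have "D m a = ?I1 \<inter> ?I2" by (auto simp: D_def)
  then show ?thesis unfolding bichain_closed_sets_def using 1 2 by blast
qed

lemma closed_sup: assumes "w \<in> cls" "e m \<in> w" "a \<in> w" shows "D m a \<subseteq> w"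
proof -
  obtain I1 I2 where w: "w = I1 \<inter> I2" and i1: "initial_segment X r1 I1" and i2: "initial_segment X r2 I2"
    using assms(1) unfolding bichain_closed_sets_def by blast
  show ?thesis
  proof
    fix x assume x: "x \<in> D m a"
    then have xX: "x \<in> X" and xm: "idx x \<le> m" and xa: "(x,a) \<in> r2" by (auto simp: D_def)
    have "(x, e m) \<in> r1" using er1[of "idx x" m] xm xX by simp
    then have "x \<in> I1" using i1 assms(2) w xX unfolding initial_segment_def by blast
    moreover have "x \<in> I2" using i2 assms(3) w xX xa unfolding initial_segment_def by blast
    ultimately show "x \<in> w" using w by blast
  qed
qed

lemma cl_eq: assumes "F \<subseteq> D m a" "e m \<in> F" "a \<in> F" shows "cl F = D m a"
proof -
  have "cl F \<subseteq> D m a" unfolding bichain_closure_def using D_closed assms(1) by blast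
  moreover have "D m a \<subseteq> cl F" unfolding bichain_closure_def
    using closed_sup assms(2,3) by blast
  ultimately show ?thesis by blast
qed

lemma empty_closed: "{} \<in> cls"
proof -
  have "initial_segment X r1 {}" "initial_segment X r2 {}" by (auto simp: initial_segment_def)
  then show ?thesis unfolding bichain_closed_sets_def by blast
qed

lemma cl_empty: "cl {} = {}" unfolding bichain_closure_def using empty_closed by blast

lemma D_em: "valid m a \<Longrightarrow> e m \<in> D m a" by (auto simp: D_def valid_def)
lemma D_a: "valid m a \<Longrightarrow> a \<in> D m a" by (auto simp: D_def valid_def refl2)
lemma D_mono: "m \<le> m' \<Longrightarrow> (a,a') \<in> r2 \<Longrightarrow> D m a \<subseteq> D m' a'"
  by (auto simp: D_def dest: trans2)
lemma D_finite: "finite (D m a)"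
proof -
  have "D m a \<subseteq> e ` {..m}"
  proof
    fix x assume "x \<in> D m a" then show "x \<in> e ` {..m}" by (auto simp: D_def intro!: image_eqI[where x="idx x"])
  qed
  then show ?thesis by (rule finite_subset) simp
qed

lemma valid_K: "valid m a \<Longrightarrow> D m a \<in> KK"
proof -
  assume v: "valid m a"
  have "cl {e m, a} = D m a" by (rule cl_eq) (use D_em[OF v] D_a[OF v] in auto)
  moreover have "finite {e m, a} \<and> {e m, a} \<subseteq> X" using v by (auto simp: valid_def)
  ultimately show ?thesis unfolding bichain_compacts_def by blast
qed

lemma K_cases: assumes "c \<in> KK" shows "c = {} \<or> (\<exists>m a. valid m a \<and> c = D m a)"
proof -
  obtain F where c: "c = cl F" and F: "finite F" "F \<subseteq> X" using assms unfolding bichain_compacts_def by blast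
  show ?thesis
  proof (cases "F = {}")
    case True then show ?thesis using c cl_empty by simp
  next
    case False
    define m where "m = Max (idx ` F)"
    have "m \<in> idx ` F" unfolding m_def using F False by simp
    then obtain x0 where x0: "x0 \<in> F" "m = idx x0" by blast
    have em: "e m \<in> F" using x0 F by auto
    have "Max (phi ` F) \<in> phi ` F" using F False by simp
    then obtain a where a: "a \<in> F" "phi a = Max (phi ` F)" by (rule imageE) (rule that, assumption, simp)
    have aX: "a \<in> X" using a F by auto
    have le: "(x,a) \<in> r2" if x: "x \<in> F" for x
    proof -
      have "phi x \<le> Max (phi ` F)" using F x by (intro Max_ge) auto
      then show ?thesis using phi_le_r2[of x a] x F aX a by auto
    qed
    have idxle: "\<And>x. x \<in> F \<Longrightarrow> idx x \<le> m" unfolding m_def using F by simp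
    have v: "valid m a" unfolding valid_def using aX idxle a le em by blast
    have "F \<subseteq> D m a" unfolding D_def using F le idxle by blast
    then have "c = D m a" using c cl_eq em a by blast
    then show ?thesis using v by blast
  qed
qed

lemma K_closed: "c \<in> KK \<Longrightarrow> c \<in> cls"
  using K_cases empty_closed D_closed by blast

definition G where "G c = (if c = {} then (0, 0) else (Suc (Max (idx ` c)), Max (phi ` c)))"

lemma G_D: assumes v: "valid m a" shows "G (D m a) = (Suc m, phi a)"
proof -
  have ne: "D m a \<noteq> {}" using D_a[OF v] by blast
  have "m \<in> idx ` D m a" using image_eqI[of m idx "e m"] D_em[OF v] by simp
  then have "Max (idx ` D m a) = m"
    by (intro Max_eqI) (use D_finite in \<open>auto simp: D_def\<close>)
  moreover have "Max (phi ` D m a) = phi a"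
    by (rule Max_eqI) (use D_finite D_a[OF v] v in \<open>auto simp: D_def valid_def intro: phi_mono\<close>)
  ultimately show ?thesis using ne by (simp add: G_def)
qed

lemma pow_T: assumes "i < n" shows "(2::rat)^n * T x i = of_int (if (e i, x) \<in> r2 then 2^(n - Suc i) else 0)"
proof -
  have "n = (n - Suc i) + Suc i" using assms by simp
  then have "(2::rat)^n = 2^(n - Suc i) * 2^Suc i" using power_add[of "2::rat" "n - Suc i" "Suc i"] by simp
  then show ?thesis by (simp add: T_def power_one_over)
qed

lemma phi_dyadic: assumes "Suc (idx a) \<le> n" shows "\<exists>k::int. (2::rat)^n * phi a = of_int k"
proof -
  have "(2::rat)^n * phi a = (\<Sum>i<Suc (idx a). (2::rat)^n * T a i)" by (simp only: phi_def sum_distrib_left)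
  also have "\<dots> = (\<Sum>i<Suc (idx a). of_int (if (e i, a) \<in> r2 then 2^(n - Suc i) else 0))"
    by (rule sum.cong) (use assms pow_T in auto)
  also have "\<dots> = of_int (\<Sum>i<Suc (idx a). (if (e i, a) \<in> r2 then 2^(n - Suc i) else 0))" by (simp only: of_int_sum)
  finally show ?thesis by blast
qed

lemma phi_unit: "a \<in> X \<Longrightarrow> phi a \<in> dyadic_unit"
  unfolding dyadic_unit_def using phi_nonneg phi_lt1 phi_dyadic[of a "Suc (idx a)"] by blast

lemma G_Omega: assumes "c \<in> KK" shows "G c \<in> Omega_eta"
proof -
  from K_cases[OF assms] show ?thesis
  proof
    assume "c = {}" then show ?thesis
      by (simp add: G_def Omega_eta_def dyadic_unit_def)
  next
    assume "\<exists>m a. valid m a \<and> c = D m a"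
    then obtain m a where v: "valid m a" and c: "c = D m a" by blast
    have "phi a \<in> dyadic_unit" using v phi_unit by (simp add: valid_def)
    moreover have "\<exists>k::int. (2::rat)^Suc m * phi a = of_int k" using v by (intro phi_dyadic) (simp add: valid_def)
    ultimately show ?thesis using c G_D[OF v] by (simp add: Omega_eta_def)
  qed
qed

lemma join_K_empty: "is_join (\<subseteq>) KK {} c c3 \<Longrightarrow> c \<in> KK \<Longrightarrow> c3 = c"
  unfolding is_join_def by blast
lemma join_K_empty2: "is_join (\<subseteq>) KK c {} c3 \<Longrightarrow> c \<in> KK \<Longrightarrow> c3 = c"
  unfolding is_join_def by blast

lemma join_K_D:
  assumes v: "valid m a" and v': "valid m' a'" and j: "is_join (\<subseteq>) KK (D m a) (D m' a') c3"
  defines "A \<equiv> (if (a,a') \<in> r2 then a' else a)"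
  shows "valid (max m m') A \<and> c3 = D (max m m') A"
proof -
  have aX: "a \<in> X" "a' \<in> X" using v v' by (auto simp: valid_def)
  have aA: "(a, A) \<in> r2" "(a', A) \<in> r2" unfolding A_def using aX total2 refl2 by auto
  have vM: "valid (max m m') A"
  proof -
    have "A \<in> X" using aX A_def by auto
    moreover have "idx A \<le> max m m'" using v v' A_def by (auto simp: valid_def)
    moreover have "(e (max m m'), A) \<in> r2"
      using v v' aA by (auto simp: valid_def max_def intro: trans2)
    ultimately show ?thesis by (simp add: valid_def)
  qed
  have sub1: "D m a \<subseteq> D (max m m') A" "D m' a' \<subseteq> D (max m m') A" using D_mono aA by auto
  have c3K: "c3 \<in> KK" and s1: "D m a \<subseteq> c3" and s2: "D m' a' \<subseteq> c3" using j by (auto simp: is_join_def)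
  have "c3 \<subseteq> D (max m m') A" using j sub1 valid_K[OF vM] unfolding is_join_def by blast
  moreover have "D (max m m') A \<subseteq> c3"
  proof (rule closed_sup[OF K_closed[OF c3K]])
    show "e (max m m') \<in> c3" using D_em[OF v] D_em[OF v'] s1 s2 by (auto simp: max_def)
    show "A \<in> c3" using D_a[OF v] D_a[OF v'] s1 s2 A_def by auto
  qed
  ultimately show ?thesis using vM by blast
qed

lemma join_K_D2:
  assumes v: "valid m a" and v': "valid m' a'"
  defines "A \<equiv> (if (a,a') \<in> r2 then a' else a)"
  shows "is_join (\<subseteq>) KK (D m a) (D m' a') (D (max m m') A)"
proof -
  have aX: "a \<in> X" "a' \<in> X" using v v' by (auto simp: valid_def)
  have aA: "(a, A) \<in> r2" "(a', A) \<in> r2" unfolding A_def using aX total2 refl2 by auto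
  have vM: "valid (max m m') A"
  proof -
    have "A \<in> X" using aX A_def by auto
    moreover have "idx A \<le> max m m'" using v v' A_def by (auto simp: valid_def)
    moreover have "(e (max m m'), A) \<in> r2"
      using v v' aA by (auto simp: valid_def max_def intro: trans2)
    ultimately show ?thesis by (simp add: valid_def)
  qed
  have sub1: "D m a \<subseteq> D (max m m') A" "D m' a' \<subseteq> D (max m m') A" using D_mono aA by auto
  have "D (max m m') A \<subseteq> w" if w: "w \<in> KK" "D m a \<subseteq> w" "D m' a' \<subseteq> w" for w
  proof (rule closed_sup[OF K_closed[OF w(1)]])
    show "e (max m m') \<in> w" using D_em[OF v] D_em[OF v'] w by (auto simp: max_def)
    show "A \<in> w" using D_a[OF v] D_a[OF v'] w A_def by auto
  qed
  then show ?thesis unfolding is_join_def using valid_K[OF vM] sub1 by blast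
qed

lemma phi_max: "a \<in> X \<Longrightarrow> a' \<in> X \<Longrightarrow> phi (if (a,a') \<in> r2 then a' else a) = max (phi a) (phi a')"
proof -
  assume a: "a \<in> X" "a' \<in> X"
  show ?thesis
  proof (cases "(a,a') \<in> r2")
    case True then show ?thesis using phi_mono[OF a] by (simp add: max_def)
  next
    case False then have "(a',a) \<in> r2" using total2[OF a] by blast
    then have "phi a' \<le> phi a" using phi_mono a by blast
    then show ?thesis using False by (simp add: max_def)
  qed
qed


end

lemma max_Omega: assumes "p \<in> Omega_eta" "q \<in> Omega_eta"
  shows "(max (fst p) (fst q), max (snd p) (snd q)) \<in> Omega_eta"
proof -
  obtain n r n' r' where p: "p = (n,r)" and q: "q = (n',r')" by fastforce
  obtain k k' where kk: "(2::rat)^n * r = of_int k" "(2::rat)^n' * r' = of_int k'" and u: "r \<in> dyadic_unit" "r' \<in> dyadic_unit"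
    using assms p q by (auto simp: Omega_eta_def)
  have "\<exists>k. (2::rat)^(max n n') * r = of_int k" "\<exists>k. (2::rat)^(max n n') * r' = of_int k"
    using dy_up[OF kk(1)] dy_up[OF kk(2)] by auto
  then show ?thesis using p q u by (auto simp: Omega_eta_def max_def)
qed

lemma join_Omega: assumes "p \<in> Omega_eta" "q \<in> Omega_eta"
  shows "is_join prod_le Omega_eta p q (max (fst p) (fst q), max (snd p) (snd q))"
  using max_Omega[OF assms] by (auto simp: is_join_def prod_le_def)

lemma join_zero: assumes "q \<in> Omega_eta" shows "is_join prod_le Omega_eta (0,0) q q" "is_join prod_le Omega_eta q (0,0) q"
proof -
  have z: "(0,0) \<in> Omega_eta" by (simp add: Omega_eta_def dyadic_unit_def)
  have "0 \<le> snd q" using assms by (auto simp: Omega_eta_def dyadic_unit_def)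
  then show "is_join prod_le Omega_eta (0,0) q q" "is_join prod_le Omega_eta q (0,0) q"
    using join_Omega[OF z assms] join_Omega[OF assms z] by (simp_all add: max_def)
qed

lemma join_unique: "is_join prod_le S p q z \<Longrightarrow> is_join prod_le S p q z' \<Longrightarrow> z = z'"
  unfolding is_join_def prod_le_def by (metis antisym prod_eq_iff)


context setting begin

theorem dir2: "join_embedding G KK (\<subseteq>) Omega_eta prod_le"
  unfolding join_embedding_def
proof (intro conjI ballI impI)
  show "inj_on G KK"
  proof (rule inj_onI)
    fix c c' assume c: "c \<in> KK" and c': "c' \<in> KK" and eq: "G c = G c'"
    show "c = c'"
      using K_cases[OF c] K_cases[OF c']
    proof (elim disjE exE conjE)
      fix m a m' a' assume v: "valid m a" "c = D m a" and v': "valid m' a'" "c' = D m' a'"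
      then have "m = m'" "phi a = phi a'" using eq G_D by auto
      then show ?thesis using v v' phi_inj by (auto simp: valid_def)
    qed (use eq G_D in \<open>auto simp: G_def\<close>)
  qed
  show "G ` KK \<subseteq> Omega_eta" using G_Omega by blast
  fix c1 c2 c3 assume c1: "c1 \<in> KK" and c2: "c2 \<in> KK" and c3: "c3 \<in> KK" and j: "is_join (\<subseteq>) KK c1 c2 c3"
  show "is_join prod_le Omega_eta (G c1) (G c2) (G c3)"
  proof (cases "c1 = {}")
    case True
    then have "c3 = c2" using join_K_empty j c2 by blast
    then show ?thesis using True join_zero G_Omega[OF c2] by (simp add: G_def)
  next
    case False
    show ?thesis
    proof (cases "c2 = {}")
      case True
      then have "c3 = c1" using join_K_empty2 j c1 by blast
      then show ?thesis using True join_zero G_Omega[OF c1] by (simp add: G_def)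
    next
      case False2: False
      obtain m a where v: "valid m a" and e1: "c1 = D m a" using K_cases[OF c1] False by blast
      obtain m' a' where v': "valid m' a'" and e2: "c2 = D m' a'" using K_cases[OF c2] False2 by blast
      define A where "A = (if (a,a') \<in> r2 then a' else a)"
      have r: "valid (max m m') A" "c3 = D (max m m') A" using join_K_D[OF v v'] j e1 e2 A_def by auto
      have "G c3 = (max (fst (G c1)) (fst (G c2)), max (snd (G c1)) (snd (G c2)))"
        using G_D[OF r(1)] r(2) G_D[OF v] G_D[OF v'] e1 e2 phi_max[of a a'] v v' A_def
        by (auto simp: valid_def)
      then show ?thesis using join_Omega G_Omega c1 c2 by simp
    qed
  qed
qed


end

locale setting2 = setting X r1 r2 e for X :: "'a set" and r1 r2 e +
  fixes g :: "rat \<Rightarrow> 'a"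
  assumes ginj: "inj g" and grange: "range g \<subseteq> X" and gmono: "\<And>p q. p \<le> q \<Longrightarrow> (g p, g q) \<in> r2"
begin

lemma g_in[simp]: "g q \<in> X" using grange by auto

definition P where "P i \<longleftrightarrow> (e i, g 0) \<in> r2"

lemma P_unb: "\<exists>i\<ge>N. P i"
proof -
  let ?u = "\<lambda>n::nat. idx (g (- of_nat n))"
  have "inj ?u"
  proof (rule injI)
    fix x y assume "?u x = ?u y"
    then have "g (- of_nat x) = g (- of_nat y)" using idx_inj by simp
    then show "x = y" using ginj by (auto dest: injD)
  qed
  then have "infinite (range ?u)" by (rule range_inj_infinite)
  moreover have "range ?u \<subseteq> {i. P i}" by (auto simp: P_def intro!: gmono)
  ultimately have "infinite {i. P i}" using finite_subset by blast
  then show ?thesis unfolding infinite_nat_iff_unbounded_le by blast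
qed

definition B where "B n = Max ((\<lambda>k. idx (g (of_nat k / 2^n))) ` {..<2^n})"

lemma B_bound: assumes r: "r \<in> dyadic_unit" and k: "(2::rat)^n * r = of_int k" shows "idx (g r) \<le> B n"
proof -
  have r0: "0 \<le> r" "r < 1" using r by (auto simp: dyadic_unit_def)
  have "(0::rat) \<le> 2^n * r" using r0 by simp
  then have k0: "0 \<le> k" using k by simp
  have "(2::rat)^n * r < 2^n * 1" using r0 by (intro mult_strict_left_mono) auto
  then have "of_int k < (of_int (2^n) :: rat)" using k by simp
  then have "k < 2^n" by (simp only: of_int_less_iff)
  then have kn: "nat k < 2^n" using k0 by (simp add: nat_less_iff)
  have "r = of_int k / 2^n" using k by (simp add: field_simps)
  also have "\<dots> = of_nat (nat k) / 2^n" using k0 by simp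
  finally have "idx (g r) = (\<lambda>k. idx (g (of_nat k / 2^n))) (nat k)" by simp
  moreover have "(\<lambda>k. idx (g (of_nat k / 2^n))) (nat k) \<le> B n" unfolding B_def using kn by (intro Max_ge) auto
  ultimately show ?thesis by simp
qed

primrec hh :: "nat \<Rightarrow> nat" where
  "hh 0 = (SOME i. B 0 \<le> i \<and> P i)"
| "hh (Suc n) = (SOME i. max (B (Suc n)) (Suc (hh n)) \<le> i \<and> P i)"

lemma hh_prop: "B n \<le> hh n \<and> P (hh n)"
proof (cases n)
  case 0 then show ?thesis using someI_ex[OF P_unb[of "B 0"]] by simp
next
  case (Suc m) then show ?thesis using someI_ex[OF P_unb[of "max (B (Suc m)) (Suc (hh m))"]] by simp
qed

lemma hh_Suc: "hh n < hh (Suc n)"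
  using someI_ex[OF P_unb[of "max (B (Suc n)) (Suc (hh n))"]] by simp

lemma hh_sm: "strict_mono hh" using hh_Suc by (simp add: strict_mono_Suc_iff)

lemma hh_max: "hh (max n n') = max (hh n) (hh n')"
  using hh_sm by (auto simp: max_def strict_mono_leD strict_mono_less_eq)

definition f where "f p = D (hh (fst p)) (g (snd p))"

lemma f_valid: assumes "(n, r) \<in> Omega_eta" shows "valid (hh n) (g r)"
proof -
  have r: "r \<in> dyadic_unit" and k: "\<exists>k::int. (2::rat)^n * r = of_int k" using assms by (auto simp: Omega_eta_def)
  have "idx (g r) \<le> hh n" using B_bound[OF r] k hh_prop[of n] by fastforce
  moreover have "(e (hh n), g r) \<in> r2"
    using hh_prop[of n] gmono[of 0 r] r by (auto simp: P_def dyadic_unit_def intro: trans2)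
  ultimately show ?thesis by (simp add: valid_def)
qed

theorem dir1: "join_embedding f Omega_eta prod_le KK (\<subseteq>)"
  unfolding join_embedding_def
proof (intro conjI ballI impI)
  show "inj_on f Omega_eta"
  proof (rule inj_onI)
    fix p q assume p: "p \<in> Omega_eta" and q: "q \<in> Omega_eta" and eq: "f p = f q"
    obtain n r n' r' where pq: "p = (n,r)" "q = (n',r')" by fastforce
    have v1: "valid (hh n) (g r)" using f_valid p pq by simp
    have v2: "valid (hh n') (g r')" using f_valid q pq by simp
    have "G (f p) = (Suc (hh n), phi (g r))" unfolding f_def pq fst_conv snd_conv by (rule G_D[OF v1])
    moreover have "G (f q) = (Suc (hh n'), phi (g r'))" unfolding f_def pq fst_conv snd_conv by (rule G_D[OF v2])
    ultimately have e1: "hh n = hh n'" and e2: "phi (g r) = phi (g r')" using eq by auto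
    have "n = n'" using e1 strict_mono_eq[OF hh_sm] by blast
    moreover have "g r = g r'" using phi_inj[OF g_in g_in e2] .
    then have "r = r'" using injD[OF ginj] by blast
    ultimately show "p = q" using pq by simp
  qed
  show "f ` Omega_eta \<subseteq> KK"
  proof
    fix c assume "c \<in> f ` Omega_eta"
    then obtain n r where "(n,r) \<in> Omega_eta" "c = f (n,r)" by auto
    then show "c \<in> KK" using f_valid valid_K by (simp add: f_def)
  qed
  fix p q z assume p: "p \<in> Omega_eta" and q: "q \<in> Omega_eta" and z: "z \<in> Omega_eta" and j: "is_join prod_le Omega_eta p q z"
  obtain n r n' r' where pq: "p = (n,r)" "q = (n',r')" by fastforce
  have v1: "valid (hh n) (g r)" using f_valid p pq by simp
  have v2: "valid (hh n') (g r')" using f_valid q pq by simp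
  have zz: "z = (max n n', max r r')" using join_unique[OF j join_Omega[OF p q]] pq by simp
  have gm: "g (max r r') = (if (g r, g r') \<in> r2 then g r' else g r)"
  proof (cases "r \<le> r'")
    case True then show ?thesis using gmono by (simp add: max_def)
  next
    case False
    then have "(g r', g r) \<in> r2" using gmono by simp
    moreover have "g r \<noteq> g r'" using False ginj by (metis injD order_refl)
    ultimately have "(g r, g r') \<notin> r2" using antisym2 by blast
    then show ?thesis using False by (simp add: max_def)
  qed
  have fz: "f z = D (max (hh n) (hh n')) (if (g r, g r') \<in> r2 then g r' else g r)"
    unfolding f_def zz fst_conv snd_conv hh_max gm ..
  show "is_join (\<subseteq>) KK (f p) (f q) (f z)"
    unfolding fz using join_K_D2[OF v1 v2] pq by (simp add: f_def)
qed

end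

theorem theorem8p3:
  fixes X :: "'a set" and r1 r2 :: "'a rel"
  assumes "bichain X r1 r2"
    and "has_order_type_omega X r1"
    and "contains_copy_of_rat X r2"
  shows "join_equimorphic Omega_eta prod_le
           (bichain_compacts X r1 r2) (\<subseteq>)"
proof -
  have "\<exists>f::nat \<Rightarrow> 'a. bij_betw f UNIV X \<and> (\<forall>i j. (f i, f j) \<in> r1 \<longleftrightarrow> i \<le> j)"
    using assms(2) unfolding has_order_type_omega_def .
  then obtain e :: "nat \<Rightarrow> 'a" where e0: "bij_betw e UNIV X \<and> (\<forall>i j. (e i, e j) \<in> r1 \<longleftrightarrow> i \<le> j)" ..
  note e = conjunct1[OF e0] conjunct2[OF e0]
  have "\<exists>g::rat \<Rightarrow> 'a. inj g \<and> range g \<subseteq> X \<and> (\<forall>p q. p \<le> q \<longrightarrow> (g p, g q) \<in> r2)"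
    using assms(3) unfolding contains_copy_of_rat_def .
  then obtain g :: "rat \<Rightarrow> 'a" where g0: "inj g \<and> range g \<subseteq> X \<and> (\<forall>p q. p \<le> q \<longrightarrow> (g p, g q) \<in> r2)" ..
  note g = conjunct1[OF g0] conjunct1[OF conjunct2[OF g0]] conjunct2[OF conjunct2[OF g0]]
  interpret setting2 X r1 r2 e g
  proof (intro setting2.intro setting.intro setting2_axioms.intro)
    show "linear_order_on X r2" using assms(1) by (simp add: bichain_def)
    show "bij_betw e UNIV X" by (rule e(1))
    show "(e i, e j) \<in> r1 \<longleftrightarrow> i \<le> j" for i j using e(2) by blast
    show "inj g" by (rule g(1))
    show "range g \<subseteq> X" by (rule g(2))
    show "(g p, g q) \<in> r2" if "p \<le> q" for p q using g(3) that by blast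
  qed
  have "join_embedding f Omega_eta prod_le (bichain_compacts X r1 r2) (\<subseteq>)" by (rule dir1)
  moreover have "join_embedding G (bichain_compacts X r1 r2) (\<subseteq>) Omega_eta prod_le" by (rule dir2)
  ultimately show ?thesis unfolding join_equimorphic_def by (intro conjI exI)
qed

end
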